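(* Let $f:U\to\mathbb{R}^3$ be a Guichard net and $\hat f$ an associated system of $f$ given by $d\hat f=\sum_{m=1}^3h_m\partial_mf\,dx_m$. Then, for each $i\in\{1,2,3\}$, the coordinate surfaces $x_i=\mathrm{const}$ of $f$ are totally umbilic if and only if $\partial_ih_i=0$.
   Context: $U\subset\mathbb{R}^3$ open connected, coordinates $(x_1,x_2,x_3)=(x,y,z)$, $\partial_i=\partial_{x_i}$. A triply orthogonal system is $f:U\to\mathbb{R}^3$ with $\det(\partial_1f,\partial_2f,\partial_3f)\ne0$ and $(\partial_if,\partial_jf)=0$ for $i\ne j$. For $(i,j,k)$ cyclic, $N_i=\partial_jf\times\partial_kf/|\cdot|$, Lamé coefficients $H_i$ by $\partial_if=H_iN_i$, rotational coefficients $\beta_{ij}=\frac1{H_i}\partial_iH_j$, and $\kappa_{ij}=-\beta_{ij}/H_j$ (principal curvature of $x_i=\mathrm{const}$ along $x_j$-lines); the surfaces $x_i=\mathrm{const}$ are totally umbilic if $\kappa_{ij}=\kappa_{ik}$. A Guichard net satisfies $H_1^2+H_2^2-H_3^2=0$. Its associated systems are $\hat f$ with $d\hat f=\sum h_m\partial_mf\,dx_m$, where $(h_1,h_2,h_3)$ solves $\partial_xh_3=-\frac{H_2}{H_3}\kappa_{13}$, $\partial_yh_3=\frac{H_1}{H_3}\kappa_{23}$, $\partial_zh_3=-\frac{H_1H_2}{H_3^2}(\kappa_{31}-\kappa_{32})$, $h_1=h_3+\frac{H_2}{H_1H_3}$, $h_2=h_3-\frac{H_1}{H_2H_3}$. 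*)

theory Defs
  imports "HOL-Analysis.Analysis"
begin

unbundle no cross3_syntax

text \<open>Coordinates x_1,x_2,x_3 of R^3 are indexed by the type 3 (numerals 1,2,3 :: 3,
  where 3 = 0 in the ring 3); the cyclic successor of i is i+1 (mod 3).\<close>

definition partial :: "3 \<Rightarrow> (real^3 \<Rightarrow> 'b::real_normed_vector) \<Rightarrow> real^3 \<Rightarrow> 'b" where
  "partial i g p = frechet_derivative g (at p) (axis i 1)"

fun Ck_on :: "nat \<Rightarrow> (real^3) set \<Rightarrow> (real^3 \<Rightarrow> 'b::real_normed_vector) \<Rightarrow> bool" where
  "Ck_on 0 U g = continuous_on U g"
| "Ck_on (Suc k) U g = (g differentiable_on U \<and> (\<forall>i. Ck_on k U (partial i g)))"

definition smooth3_on :: "(real^3) set \<Rightarrow> (real^3 \<Rightarrow> 'b::real_normed_vector) \<Rightarrow> bool" where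
  "smooth3_on U g = (\<forall>k. Ck_on k U g)"

definition triply_orthogonal :: "(real^3) set \<Rightarrow> (real^3 \<Rightarrow> real^3) \<Rightarrow> bool" where
  "triply_orthogonal U f =
     (\<forall>p\<in>U. det (\<chi> r c. partial c f p $ r) \<noteq> 0 \<and>
            (\<forall>i j. i \<noteq> j \<longrightarrow> partial i f p \<bullet> partial j f p = 0))"

definition unit_normal :: "(real^3 \<Rightarrow> real^3) \<Rightarrow> 3 \<Rightarrow> real^3 \<Rightarrow> real^3" where
  "unit_normal f i p =
     (let c = cross3 (partial (i+1) f p) (partial (i+2) f p) in (1 / norm c) *\<^sub>R c)"

text \<open>Lame coefficient H_i, defined by d_i f = H_i N_i.\<close>
definition lame :: "(real^3 \<Rightarrow> real^3) \<Rightarrow> 3 \<Rightarrow> real^3 \<Rightarrow> real" where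
  "lame f i p = partial i f p \<bullet> unit_normal f i p"

definition rot_coeff :: "(real^3 \<Rightarrow> real^3) \<Rightarrow> 3 \<Rightarrow> 3 \<Rightarrow> real^3 \<Rightarrow> real" where
  "rot_coeff f i j p = partial i (lame f j) p / lame f i p"

definition kappa :: "(real^3 \<Rightarrow> real^3) \<Rightarrow> 3 \<Rightarrow> 3 \<Rightarrow> real^3 \<Rightarrow> real" where
  "kappa f i j p = - rot_coeff f i j p / lame f j p"

definition guichard_net :: "(real^3) set \<Rightarrow> (real^3 \<Rightarrow> real^3) \<Rightarrow> bool" where
  "guichard_net U f =
     (triply_orthogonal U f \<and>
      (\<forall>p\<in>U. (lame f 1 p)\<^sup>2 + (lame f 2 p)\<^sup>2 - (lame f 3 p)\<^sup>2 = 0))"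

definition totally_umbilic_coord :: "(real^3) set \<Rightarrow> (real^3 \<Rightarrow> real^3) \<Rightarrow> 3 \<Rightarrow> bool" where
  "totally_umbilic_coord U f i = (\<forall>p\<in>U. kappa f i (i+1) p = kappa f i (i+2) p)"

definition assoc_coeffs :: "(real^3) set \<Rightarrow> (real^3 \<Rightarrow> real^3) \<Rightarrow> (3 \<Rightarrow> real^3 \<Rightarrow> real) \<Rightarrow> bool" where
  "assoc_coeffs U f h =
     ((\<forall>m. h m differentiable_on U) \<and>
      (\<forall>p\<in>U.
        partial 1 (h 3) p = - (lame f 2 p / lame f 3 p) * kappa f 1 3 p \<and>
        partial 2 (h 3) p = (lame f 1 p / lame f 3 p) * kappa f 2 3 p \<and>
        partial 3 (h 3) p = - (lame f 1 p * lame f 2 p / (lame f 3 p)\<^sup>2)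
                               * (kappa f 3 1 p - kappa f 3 2 p) \<and>
        h 1 p = h 3 p + lame f 2 p / (lame f 1 p * lame f 3 p) \<and>
        h 2 p = h 3 p - lame f 1 p / (lame f 2 p * lame f 3 p)))"

definition associated_system :: "(real^3) set \<Rightarrow> (real^3 \<Rightarrow> real^3) \<Rightarrow> (real^3 \<Rightarrow> real^3)
     \<Rightarrow> (3 \<Rightarrow> real^3 \<Rightarrow> real) \<Rightarrow> bool" where
  "associated_system U f fhat h =
     (assoc_coeffs U f h \<and> fhat differentiable_on U \<and>
      (\<forall>p\<in>U. \<forall>m. partial m fhat p = h m p *\<^sub>R partial m f p))"

end

theory Submission
  imports Defs
begin

lemma partial_has_derivative:
  "(g has_derivative g') (at p) \<Longrightarrow> partial i g p = g' (axis i 1)"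
  unfolding partial_def using frechet_derivative_at by metis

lemma partial_works:
  "g differentiable at p \<Longrightarrow> (g has_derivative (\<lambda>v. \<Sum>i\<in>UNIV. v $ i *\<^sub>R partial i g p)) (at p)"
proof -
  assume "g differentiable at p"
  then have d: "(g has_derivative frechet_derivative g (at p)) (at p)"
    using frechet_derivative_works by blast
  then have lin: "linear (frechet_derivative g (at p))" using has_derivative_linear by blast
  have "frechet_derivative g (at p) = (\<lambda>v. \<Sum>i\<in>UNIV. v $ i *\<^sub>R partial i g p)"
  proof
    fix v :: "real^3"
    have "v = (\<Sum>i\<in>UNIV. v $ i *\<^sub>R axis i 1)"
      by (simp add: vec_eq_iff axis_def sum.delta' if_distrib cong: if_cong)
    then have "frechet_derivative g (at p) v = frechet_derivative g (at p) (\<Sum>i\<in>UNIV. v $ i *\<^sub>R axis i 1)" by simp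
    also have "\<dots> = (\<Sum>i\<in>UNIV. v $ i *\<^sub>R partial i g p)"
      using lin by (simp add: linear_sum linear_scale partial_def)
    finally show "frechet_derivative g (at p) v = (\<Sum>i\<in>UNIV. v $ i *\<^sub>R partial i g p)" .
  qed
  with d show ?thesis by simp
qed

lemma partial_transform:
  assumes "open U" "p \<in> U" "g differentiable at p" "\<And>x. x \<in> U \<Longrightarrow> g x = k x"
  shows "partial i k p = partial i g p"
proof -
  from assms(3) have d: "(g has_derivative frechet_derivative g (at p)) (at p)"
    using frechet_derivative_works by blast
  have "(k has_derivative frechet_derivative g (at p)) (at p)"
    by (rule has_derivative_transform_within_open[OF d assms(1,2)]) (use assms(4) in auto)
  then show ?thesis using partial_has_derivative[OF d] partial_has_derivative by metis
qed

lemma bb_cross: "bounded_bilinear cross3"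
  using bilinear_cross bilinear_conv_bounded_bilinear by blast

lemma differentiable_cross3:
  assumes "g differentiable at p" "k differentiable at p"
  shows "(\<lambda>x. cross3 (g x) (k x)) differentiable at p"
  using assms bounded_bilinear.FDERIV[OF bb_cross] unfolding differentiable_def by blast


lemma triple_ne:
  assumes "det (\<chi> r c. (v::3\<Rightarrow>real^3) c $ r) \<noteq> 0"
  shows "v j \<bullet> cross3 (v (j+1)) (v (j+2)) \<noteq> 0"
proof -
  have e: "v j \<bullet> cross3 (v (j+1)) (v (j+2)) = det (\<chi> r c. v c $ r)" for j
  proof -
    have n: "(1::3)+1 = 2" "(1::3)+2 = 3" "(2::3)+1 = 3" "(2::3)+2 = 1" "(3::3)+1 = 1" "(3::3)+2 = 2"
      by simp_all
    show ?thesis using exhaust_3[of j] by (auto simp only: n) (auto simp: cross3_simps)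
  qed
  show ?thesis using e assms by simp
qed

lemma lame_ne:
  assumes "det (\<chi> r c. partial c f p $ r) \<noteq> 0"
  shows "lame f j p \<noteq> 0" and "cross3 (partial (j+1) f p) (partial (j+2) f p) \<noteq> 0"
proof -
  have t: "partial j f p \<bullet> cross3 (partial (j+1) f p) (partial (j+2) f p) \<noteq> 0"
    using triple_ne[of "\<lambda>c. partial c f p", OF assms] .
  then show c: "cross3 (partial (j+1) f p) (partial (j+2) f p) \<noteq> 0" by auto
  show "lame f j p \<noteq> 0" using t c
    by (simp add: lame_def unit_normal_def Let_def inner_scaleR_right)
qed

lemma lame_diff:
  assumes "\<And>j. partial j f differentiable at p"
    and "cross3 (partial (j+1) f p) (partial (j+2) f p) \<noteq> 0"
  shows "lame f j differentiable at p"
proof -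
  have c: "(\<lambda>x. cross3 (partial (j+1) f x) (partial (j+2) f x)) differentiable at p"
    using differentiable_cross3 assms(1) by blast
  have n: "(\<lambda>x. norm (cross3 (partial (j+1) f x) (partial (j+2) f x))) differentiable at p"
    using differentiable_chain_at[OF c differentiable_norm_at[OF assms(2)]] by (simp add: o_def)
  have u: "unit_normal f j differentiable at p"
    unfolding unit_normal_def Let_def
    by (intro differentiable_scaleR differentiable_divide n c) (use assms(2) in auto)
  show ?thesis unfolding lame_def[abs_def]
    by (intro differentiable_inner assms(1) u)
qed


lemma partial_quot:
  fixes Ha Hb H3 ha h3 :: "real^3 \<Rightarrow> real"
  assumes U: "open U" "p \<in> U"
    and d: "Ha differentiable at p" "Hb differentiable at p" "H3 differentiable at p" "h3 differentiable at p"
    and nz: "Ha p \<noteq> 0" "H3 p \<noteq> 0"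
    and eq: "\<And>x. x \<in> U \<Longrightarrow> ha x = h3 x + c * Hb x / (Ha x * H3 x)"
  shows "partial i ha p = partial i h3 p + c * (partial i Hb p / (Ha p * H3 p)
           - Hb p * (partial i Ha p * H3 p + Ha p * partial i H3 p) / (Ha p * H3 p)^2)"
proof -
  obtain A B C E where A: "(Ha has_derivative A) (at p)" and B: "(Hb has_derivative B) (at p)"
    and C: "(H3 has_derivative C) (at p)" and E: "(h3 has_derivative E) (at p)"
    using d unfolding differentiable_def by blast
  have m: "((\<lambda>x. Ha x * H3 x) has_derivative (\<lambda>v. Ha p * C v + A v * H3 p)) (at p)"
    by (rule has_derivative_mult[OF A C])
  have q: "((\<lambda>x. c * Hb x / (Ha x * H3 x)) has_derivative
     (\<lambda>v. ((c * B v) * (Ha p * H3 p) - (c * Hb p) * (Ha p * C v + A v * H3 p)) / ((Ha p * H3 p) * (Ha p * H3 p)))) (at p)"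
    by (rule has_derivative_divide'[OF has_derivative_mult_right[OF B] m]) (use nz in simp)
  have s: "((\<lambda>x. h3 x + c * Hb x / (Ha x * H3 x)) has_derivative
     (\<lambda>v. E v + ((c * B v) * (Ha p * H3 p) - (c * Hb p) * (Ha p * C v + A v * H3 p)) / ((Ha p * H3 p) * (Ha p * H3 p)))) (at p)"
    by (rule has_derivative_add[OF E q])
  have s2: "(ha has_derivative
     (\<lambda>v. E v + ((c * B v) * (Ha p * H3 p) - (c * Hb p) * (Ha p * C v + A v * H3 p)) / ((Ha p * H3 p) * (Ha p * H3 p)))) (at p)"
    by (rule has_derivative_transform_within_open[OF s U]) (use eq in auto)
  show ?thesis
    unfolding partial_has_derivative[OF s2] partial_has_derivative[OF A] partial_has_derivative[OF B]
      partial_has_derivative[OF C] partial_has_derivative[OF E]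
    using nz by (simp add: field_simps power2_eq_square)
qed

lemma partial_guich:
  fixes H1 H2 H3 :: "real^3 \<Rightarrow> real"
  assumes U: "open U" "p \<in> U"
    and d: "H1 differentiable at p" "H2 differentiable at p" "H3 differentiable at p"
    and eq: "\<And>x. x \<in> U \<Longrightarrow> (H1 x)\<^sup>2 + (H2 x)\<^sup>2 - (H3 x)\<^sup>2 = 0"
  shows "H1 p * partial i H1 p + H2 p * partial i H2 p = H3 p * partial i H3 p"
proof -
  obtain A B C where A: "(H1 has_derivative A) (at p)" and B: "(H2 has_derivative B) (at p)"
    and C: "(H3 has_derivative C) (at p)"
    using d unfolding differentiable_def by blast
  have g: "((\<lambda>x. H1 x * H1 x + H2 x * H2 x - H3 x * H3 x) has_derivative
      (\<lambda>v. (H1 p * A v + A v * H1 p) + (H2 p * B v + B v * H2 p) - (H3 p * C v + C v * H3 p))) (at p)"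
    by (intro has_derivative_diff has_derivative_add has_derivative_mult A B C)
  have z: "((\<lambda>x. H1 x * H1 x + H2 x * H2 x - H3 x * H3 x) has_derivative (\<lambda>v. 0)) (at p)"
    by (rule has_derivative_transform_within_open[OF has_derivative_const U])
       (use eq in \<open>auto simp: power2_eq_square\<close>)
  have "(\<lambda>v. (H1 p * A v + A v * H1 p) + (H2 p * B v + B v * H2 p) - (H3 p * C v + C v * H3 p)) = (\<lambda>v. 0)"
    using has_derivative_unique[OF g z] .
  then have "(H1 p * A (axis i 1) + A (axis i 1) * H1 p) + (H2 p * B (axis i 1) + B (axis i 1) * H2 p)
     - (H3 p * C (axis i 1) + C (axis i 1) * H3 p) = 0" by metis
  then show ?thesis
    unfolding partial_has_derivative[OF A] partial_has_derivative[OF B] partial_has_derivative[OF C]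
    by (simp add: algebra_simps)
qed

lemma alg:
  fixes H1 H2 H3 a1 a2 a3 E c :: real
  assumes nz: "H1 \<noteq> 0" "H2 \<noteq> 0" "H3 \<noteq> 0" and c: "c \<noteq> 0"
    and g: "H1 * a1 + H2 * a2 = H3 * a3" and gq: "H1^2 + H2^2 = H3^2"
    and E: "E = - c * (H2 / H3) * (- (a3 / H1) / H3)"
  shows "(- (a2 / H1) / H2 = - (a3 / H1) / H3) \<longleftrightarrow>
    E + c * (a2 / (H1 * H3) - H2 * (a1 * H3 + H1 * a3) / (H1 * H3)^2) = 0"
proof -
  have a1: "a1 = (H3 * a3 - H2 * a2) / H1" using g nz by (simp add: field_simps)
  have "E + c * (a2 / (H1 * H3) - H2 * (a1 * H3 + H1 * a3) / (H1 * H3)^2)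
        = c * (H3 * a2 - H2 * a3) / H1^3"
  proof -
    have "E + c * (a2 / (H1 * H3) - H2 * (a1 * H3 + H1 * a3) / (H1 * H3)^2) = c * (H1 * a2 - H2 * a1) / (H1^2 * H3)"
      unfolding E using nz by (simp add: field_simps power2_eq_square)
    also have "H1 * a2 - H2 * a1 = H3 * (H3 * a2 - H2 * a3) / H1"
    proof -
      have "(H1*a2 - H2*a1)*H1 = (H1^2+H2^2)*a2 - H2*(H1*a1+H2*a2)"
        by (simp add: algebra_simps power2_eq_square)
      also have "\<dots> = H3 * (H3 * a2 - H2 * a3)" unfolding g gq
        by (simp add: algebra_simps power2_eq_square)
      finally show ?thesis using nz by (simp add: field_simps)
    qed
    also have "c * (H3 * (H3 * a2 - H2 * a3) / H1) / (H1^2 * H3) = c * (H3 * a2 - H2 * a3) / H1^3"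
      using nz by (simp add: field_simps power2_eq_square power3_eq_cube)
    finally show ?thesis .
  qed
  moreover have "(- (a2 / H1) / H2 = - (a3 / H1) / H3) \<longleftrightarrow> H3 * a2 - H2 * a3 = 0"
    using nz by (simp add: field_simps)
  ultimately show ?thesis using nz c by simp
qed


theorem corollary4p6:
  fixes U :: "(real^3) set" and f fhat :: "real^3 \<Rightarrow> real^3" and h :: "3 \<Rightarrow> real^3 \<Rightarrow> real"
    and i :: 3
  assumes "open U" and "connected U"
    and "smooth3_on U f"
    and "guichard_net U f"
    and "associated_system U f fhat h"
  shows "totally_umbilic_coord U f i \<longleftrightarrow> (\<forall>p\<in>U. partial i (h i) p = 0)"
proof -
  have n: "(1::3)+1 = 2" "(1::3)+2 = 3" "(2::3)+1 = 3" "(2::3)+2 = 1" "(3::3)+1 = 1" "(3::3)+2 = 2"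
    by simp_all
  have C2: "Ck_on (Suc (Suc 0)) U f" using assms(3) unfolding smooth3_on_def by blast
  have pd: "\<And>j. partial j f differentiable_on U" using C2 by simp
  have ac: "assoc_coeffs U f h" using assms(5) unfolding associated_system_def by blast
  have hd: "\<And>m. h m differentiable_on U" using ac unfolding assoc_coeffs_def by blast
  have G: "\<And>x. x \<in> U \<Longrightarrow> (lame f 1 x)\<^sup>2 + (lame f 2 x)\<^sup>2 - (lame f 3 x)\<^sup>2 = 0"
    using assms(4) unfolding guichard_net_def by blast
  have pt: "kappa f i (i+1) p = kappa f i (i+2) p \<longleftrightarrow> partial i (h i) p = 0" if p: "p \<in> U" for p
  proof -
    have det: "det (\<chi> r c. partial c f p $ r) \<noteq> 0"
      using assms(4) p unfolding guichard_net_def triply_orthogonal_def by blast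
    have pdp: "\<And>j. partial j f differentiable at p"
      using pd p assms(1) differentiable_on_eq_differentiable_at by blast
    have hdp: "\<And>m. h m differentiable at p"
      using hd p assms(1) differentiable_on_eq_differentiable_at by blast
    have nz: "\<And>j. lame f j p \<noteq> 0" using lame_ne(1)[OF det] by blast
    have ld: "\<And>j. lame f j differentiable at p"
      using lame_diff[OF pdp lame_ne(2)[OF det]] by blast
    have A: "partial 1 (h 3) p = - (lame f 2 p / lame f 3 p) * kappa f 1 3 p"
        "partial 2 (h 3) p = (lame f 1 p / lame f 3 p) * kappa f 2 3 p"
        "partial 3 (h 3) p = - (lame f 1 p * lame f 2 p / (lame f 3 p)\<^sup>2)
                               * (kappa f 3 1 p - kappa f 3 2 p)"
      and h1: "\<And>x. x \<in> U \<Longrightarrow> h 1 x = h 3 x + 1 * lame f 2 x / (lame f 1 x * lame f 3 x)"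
      and h2: "\<And>x. x \<in> U \<Longrightarrow> h 2 x = h 3 x + (-1) * lame f 1 x / (lame f 2 x * lame f 3 x)"
      using ac p unfolding assoc_coeffs_def by auto
    have gq: "(lame f 1 p)\<^sup>2 + (lame f 2 p)\<^sup>2 = (lame f 3 p)\<^sup>2" using G[OF p] by simp
    have gd: "\<And>k. lame f 1 p * partial k (lame f 1) p + lame f 2 p * partial k (lame f 2) p
               = lame f 3 p * partial k (lame f 3) p"
      by (rule partial_guich[OF assms(1) p ld ld ld G]) 
    consider "i = 1" | "i = 2" | "i = 3" using exhaust_3 by blast
    then show ?thesis
    proof cases
      case 1
      have q: "partial 1 (h 1) p = partial 1 (h 3) p + 1 * (partial 1 (lame f 2) p / (lame f 1 p * lame f 3 p)
           - lame f 2 p * (partial 1 (lame f 1) p * lame f 3 p + lame f 1 p * partial 1 (lame f 3) p) / (lame f 1 p * lame f 3 p)^2)"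
        by (rule partial_quot[OF assms(1) p ld ld ld hdp nz nz h1])
      have r: "(- (partial 1 (lame f 2) p / lame f 1 p) / lame f 2 p = - (partial 1 (lame f 3) p / lame f 1 p) / lame f 3 p) \<longleftrightarrow>
        partial 1 (h 1) p = 0"
        unfolding q
        apply (rule alg[of "lame f 1 p" "lame f 2 p" "lame f 3 p"])
        using nz gd[of 1] gq A(1) by (simp_all add: kappa_def rot_coeff_def algebra_simps)
      show ?thesis unfolding 1 n using r by (auto simp: kappa_def rot_coeff_def)
    next
      case 2
      have q: "partial 2 (h 2) p = partial 2 (h 3) p + (-1) * (partial 2 (lame f 1) p / (lame f 2 p * lame f 3 p)
           - lame f 1 p * (partial 2 (lame f 2) p * lame f 3 p + lame f 2 p * partial 2 (lame f 3) p) / (lame f 2 p * lame f 3 p)^2)"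
        by (rule partial_quot[OF assms(1) p ld ld ld hdp nz nz h2])
      have r: "(- (partial 2 (lame f 1) p / lame f 2 p) / lame f 1 p = - (partial 2 (lame f 3) p / lame f 2 p) / lame f 3 p) \<longleftrightarrow>
        partial 2 (h 2) p = 0"
        unfolding q
        apply (rule alg[of "lame f 2 p" "lame f 1 p" "lame f 3 p"])
        using nz gd[of 2] gq A(2) by (simp_all add: kappa_def rot_coeff_def algebra_simps)
      show ?thesis unfolding 2 n using r by (auto simp: kappa_def rot_coeff_def)
    next
      case 3
      show ?thesis unfolding 3 n A(3) using nz by simp
    qed
  qed
  show ?thesis unfolding totally_umbilic_coord_def using pt by blast
qed

end
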